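(* Let $H$ be a non-null series-parallel graph and let $C:V(H)\to\mathbb{Z}_{\ge 0}$ be a counter for $H$. Then $H$ has an active vertex, i.e., a vertex $v$ with $\deg_H(v)\le 2$ or $\deg_H(v)\le 3C(v)$.
   Context: Graphs are finite, may have parallel edges, but no loops. A graph is series-parallel if it has no subgraph isomorphic to a subdivision of $K_4$. For $v\in V(H)$, $\deg_H(v)$ is the number of edges incident with $v$ (counting parallel edges with multiplicity) and $\mathrm{val}_H(v)$ is the number of distinct neighbors of $v$. A function $C:V(H)\to\mathbb{Z}_{\ge0}$ is a counter for $H$ if $\deg_H(v)-\mathrm{val}_H(v)\le C(v)$ for every $v\in V(H)$. A vertex $v$ is active (with respect to $C$) if $\deg_H(v)\le 2$ or $\deg_H(v)\le 3C(v)$. *)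

theory Defs
  imports Main
begin

text \<open>A finite multigraph without loops: vertex set V, edge set E (edges are
  abstract objects, so parallel edges are allowed), and ends e = the two
  distinct endpoints of edge e.\<close>

definition multigraph :: "'a set \<Rightarrow> 'e set \<Rightarrow> ('e \<Rightarrow> 'a set) \<Rightarrow> bool" where
  "multigraph V E ends \<longleftrightarrow> finite V \<and> finite E \<and>
     (\<forall>e\<in>E. ends e \<subseteq> V \<and> card (ends e) = 2)"

definition deg :: "'e set \<Rightarrow> ('e \<Rightarrow> 'a set) \<Rightarrow> 'a \<Rightarrow> nat" where
  "deg E ends v = card {e\<in>E. v \<in> ends e}"

definition adj :: "'e set \<Rightarrow> ('e \<Rightarrow> 'a set) \<Rightarrow> 'a \<Rightarrow> 'a \<Rightarrow> bool" where
  "adj E ends u v \<longleftrightarrow> u \<noteq> v \<and> (\<exists>e\<in>E. ends e = {u, v})"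

definition val :: "'a set \<Rightarrow> 'e set \<Rightarrow> ('e \<Rightarrow> 'a set) \<Rightarrow> 'a \<Rightarrow> nat" where
  "val V E ends v = card {u\<in>V. adj E ends v u}"

definition is_counter :: "'a set \<Rightarrow> 'e set \<Rightarrow> ('e \<Rightarrow> 'a set) \<Rightarrow> ('a \<Rightarrow> nat) \<Rightarrow> bool" where
  "is_counter V E ends C \<longleftrightarrow> (\<forall>v\<in>V. deg E ends v - val V E ends v \<le> C v)"

definition is_path :: "'a set \<Rightarrow> 'e set \<Rightarrow> ('e \<Rightarrow> 'a set) \<Rightarrow> 'a list \<Rightarrow> bool" where
  "is_path V E ends p \<longleftrightarrow> p \<noteq> [] \<and> distinct p \<and> set p \<subseteq> V \<and>
     (\<forall>k. Suc k < length p \<longrightarrow> adj E ends (p ! k) (p ! Suc k))"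

definition inner :: "'a list \<Rightarrow> 'a list" where
  "inner p = butlast (tl p)"

definition has_K4_subdivision :: "'a set \<Rightarrow> 'e set \<Rightarrow> ('e \<Rightarrow> 'a set) \<Rightarrow> bool" where
  "has_K4_subdivision V E ends \<longleftrightarrow>
     (\<exists>(b :: nat \<Rightarrow> 'a) (P :: nat \<Rightarrow> nat \<Rightarrow> 'a list).
        inj_on b {..<4} \<and> b ` {..<4} \<subseteq> V \<and>
        (\<forall>i j. i < j \<and> j < 4 \<longrightarrow>
           is_path V E ends (P i j) \<and> hd (P i j) = b i \<and> last (P i j) = b j \<and>
           set (inner (P i j)) \<inter> b ` {..<4} = {}) \<and>
        (\<forall>i j k l. i < j \<and> j < 4 \<and> k < l \<and> l < 4 \<and> (i, j) \<noteq> (k, l) \<longrightarrow>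
           set (inner (P i j)) \<inter> set (P k l) = {}))"

definition series_parallel :: "'a set \<Rightarrow> 'e set \<Rightarrow> ('e \<Rightarrow> 'a set) \<Rightarrow> bool" where
  "series_parallel V E ends \<longleftrightarrow> multigraph V E ends \<and> \<not> has_K4_subdivision V E ends"

definition active :: "'e set \<Rightarrow> ('e \<Rightarrow> 'a set) \<Rightarrow> ('a \<Rightarrow> nat) \<Rightarrow> 'a \<Rightarrow> bool" where
  "active E ends C v \<longleftrightarrow> deg E ends v \<le> 2 \<or> deg E ends v \<le> 3 * C v"

end

theory Submission
  imports Defs
begin

definition seg :: "'a list \<Rightarrow> nat \<Rightarrow> nat \<Rightarrow> 'a list" where
  "seg P a b = map ((!) P) [a..<Suc b]"

lemma seg_len[simp]: "length (seg P a b) = Suc b - a" by (auto simp: seg_def)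
lemma seg_nth: "a \<le> b \<Longrightarrow> n \<le> b - a \<Longrightarrow> seg P a b ! n = P ! (a+n)"
  by (simp add: seg_def nth_append)
lemma seg_set: "set (seg P a b) = (!) P ` {a..b}"
  by (auto simp: seg_def)
lemma seg_ne: "a \<le> b \<Longrightarrow> seg P a b \<noteq> []" by (simp add: seg_def)
lemma seg_hd: "a \<le> b \<Longrightarrow> hd (seg P a b) = P!a"
  by (simp add: seg_def hd_map upt_rec)
lemma seg_last: "a \<le> b \<Longrightarrow> last (seg P a b) = P!b"
  by (simp add: seg_def last_map)

lemma inner_set: "distinct L \<Longrightarrow> L \<noteq> [] \<Longrightarrow> hd L \<noteq> last L \<Longrightarrow> set (inner L) = set L - {hd L, last L}"
proof -
  assume d: "distinct L" and ne: "L \<noteq> []" and h: "hd L \<noteq> last L"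
  obtain x M where L: "L = x # M" using ne by (cases L) auto
  have M: "M \<noteq> []" using h L by auto
  have M2: "M = butlast M @ [last M]" using M by simp
  have "inner L = butlast M" unfolding inner_def L by simp
  moreover have "set L = insert x (insert (last M) (set (butlast M)))" unfolding L
    by (subst M2) auto
  moreover have "x \<notin> set (butlast M)" "last M \<notin> set (butlast M)"
    using d M2 unfolding L by (metis distinct.simps(2) in_set_butlastD,
        metis distinct_append M2 d L distinct.simps(2) disjoint_iff list.set_intros(1))
  ultimately show ?thesis using L M by (auto simp: last_ConsR)
qed

lemma nth_in_img: "distinct P \<Longrightarrow> n < length P \<Longrightarrow> \<forall>m\<in>A. m < length P \<Longrightarrow> (P!n \<in> (!) P ` A) \<longleftrightarrow> n \<in> A"
  by (auto simp: nth_eq_iff_index_eq)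

lemma img_Int: "distinct P \<Longrightarrow> \<forall>m\<in>A\<union>B. m < length P \<Longrightarrow> (!) P ` A \<inter> (!) P ` B = (!) P ` (A \<inter> B)"
  by (rule inj_on_image_Int[symmetric, of _ "{..<length P}"]) (auto intro: inj_on_nth)


locale G3 =
  fixes V :: "'a set" and E :: "'e set" and ends :: "'e \<Rightarrow> 'a set"
  assumes mg: "multigraph V E ends"
    and deg3: "\<And>v. v \<in> V \<Longrightarrow> 3 \<le> card {u\<in>V. adj E ends v u}"
begin

abbreviation ad where "ad \<equiv> adj E ends"
abbreviation pth where "pth \<equiv> is_path V E ends"

lemma ad_sym: "ad u v \<Longrightarrow> ad v u"
  unfolding adj_def by (auto simp: insert_commute)
lemma ad_neq: "ad u v \<Longrightarrow> u \<noteq> v" unfolding adj_def by auto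
lemma ad_V: "ad u v \<Longrightarrow> u \<in> V \<and> v \<in> V"
  using mg unfolding adj_def multigraph_def by auto
lemma finV: "finite V" using mg multigraph_def by auto

lemma pth_single[simp]: "pth [x] \<longleftrightarrow> x \<in> V"
  unfolding is_path_def by auto

lemma pth_Cons2: "pth (x # y # zs) \<longleftrightarrow> ad x y \<and> x \<notin> set (y # zs) \<and> x \<in> V \<and> pth (y # zs)"
proof
  assume h: "pth (x # y # zs)"
  then have a: "\<forall>k. Suc k < length (x#y#zs) \<longrightarrow> ad ((x#y#zs) ! k) ((x#y#zs) ! Suc k)"
    unfolding is_path_def by blast
  have "ad x y" using a[rule_format, of 0] by simp
  moreover have "\<forall>k. Suc k < length (y#zs) \<longrightarrow> ad ((y#zs) ! k) ((y#zs) ! Suc k)"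
  proof (intro allI impI)
    fix k assume "Suc k < length (y#zs)"
    then show "ad ((y#zs) ! k) ((y#zs) ! Suc k)" using a[rule_format, of "Suc k"] by simp
  qed
  ultimately show "ad x y \<and> x \<notin> set (y # zs) \<and> x \<in> V \<and> pth (y # zs)"
    using h unfolding is_path_def by auto
next
  assume h: "ad x y \<and> x \<notin> set (y # zs) \<and> x \<in> V \<and> pth (y # zs)"
  then have a: "\<forall>k. Suc k < length (y#zs) \<longrightarrow> ad ((y#zs) ! k) ((y#zs) ! Suc k)"
    unfolding is_path_def by blast
  have "\<forall>k. Suc k < length (x#y#zs) \<longrightarrow> ad ((x#y#zs) ! k) ((x#y#zs) ! Suc k)"
  proof (intro allI impI)
    fix k assume k: "Suc k < length (x#y#zs)"
    show "ad ((x#y#zs) ! k) ((x#y#zs) ! Suc k)"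
    proof (cases k)
      case 0 then show ?thesis using h by simp
    next
      case (Suc m) then show ?thesis using a[rule_format, of m] k by simp
    qed
  qed
  then show "pth (x # y # zs)" using h unfolding is_path_def by auto
qed

lemma pth_append:
  assumes "xs \<noteq> []" "ys \<noteq> []"
  shows "pth (xs @ ys) \<longleftrightarrow> pth xs \<and> pth ys \<and> set xs \<inter> set ys = {} \<and> ad (last xs) (hd ys)"
  using assms
proof (induction xs rule: induct_list012)
  case 1 then show ?case by simp
next
  case (2 x)
  then obtain y zs where ys: "ys = y # zs" by (cases ys) auto
  show ?case unfolding ys by (auto simp: pth_Cons2)
next
  case (3 x x' xs)
  have "(x # x' # xs) @ ys = x # x' # (xs @ ys)" by simp
  then show ?case using 3(2)[of] 3(4) by (auto simp: pth_Cons2)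
qed

lemma pth_nonempty: "pth xs \<Longrightarrow> xs \<noteq> []" unfolding is_path_def by auto
lemma pth_distinct: "pth xs \<Longrightarrow> distinct xs" unfolding is_path_def by auto
lemma pth_setV: "pth xs \<Longrightarrow> set xs \<subseteq> V" unfolding is_path_def by auto

lemma pth_rev: "pth (rev xs) \<longleftrightarrow> pth xs"
proof (induction xs)
  case Nil then show ?case by (simp add: is_path_def)
next
  case (Cons x xs)
  show ?case
  proof (cases xs)
    case Nil then show ?thesis by simp
  next
    case (Cons y zs)
    have "pth (rev (x # xs)) = pth (rev xs @ [x])" by simp
    also have "\<dots> \<longleftrightarrow> pth (rev xs) \<and> pth [x] \<and> set (rev xs) \<inter> set [x] = {} \<and> ad (last (rev xs)) (hd [x])"
      by (rule pth_append) (auto simp: Cons)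
    also have "\<dots> \<longleftrightarrow> pth (x # xs)" using Cons.IH unfolding Cons
      by (auto simp: pth_Cons2 ad_sym hd_rev last_rev)
    finally show ?thesis .
  qed
qed

lemma pth_seg: assumes "pth P" "a \<le> b" "b < length P" shows "pth (seg P a b)"
proof -
  have d: "distinct P" "set P \<subseteq> V" and adjP: "\<forall>k. Suc k < length P \<longrightarrow> ad (P!k) (P!Suc k)"
    using assms(1) unfolding is_path_def by auto
  have "inj_on ((!) P) {a..<Suc b}" by (rule inj_on_nth) (use d assms in auto)
  then have "distinct (seg P a b)" by (simp only: seg_def distinct_map set_upt distinct_upt simp_thms)
  moreover have "set (seg P a b) \<subseteq> V" using d(2) assms by (auto simp: seg_set)
  moreover have "\<forall>k. Suc k < length (seg P a b) \<longrightarrow> ad (seg P a b ! k) (seg P a b ! Suc k)"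
  proof (intro allI impI)
    fix k assume "Suc k < length (seg P a b)"
    then have "Suc k \<le> b - a" using assms by simp
    then show "ad (seg P a b ! k) (seg P a b ! Suc k)"
      using adjP[rule_format, of "a+k"] assms by (simp add: seg_nth)
  qed
  ultimately show ?thesis using seg_ne[OF assms(2)] unfolding is_path_def by blast
qed

lemma inner_seg: assumes "pth P" "a < b" "b < length P"
  shows "set (inner (seg P a b)) = (!) P ` {a<..<b}"
proof -
  have ps: "pth (seg P a b)" using pth_seg assms by auto
  have d: "distinct P" using assms(1) pth_distinct by auto
  have ne: "P!a \<noteq> P!b" using d assms by (simp add: nth_eq_iff_index_eq)
  have "set (inner (seg P a b)) = set (seg P a b) - {P!a, P!b}"
    using inner_set[of "seg P a b"] pth_distinct[OF ps] assms ne
    by (simp add: seg_ne seg_hd seg_last)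
  also have "\<dots> = (!) P ` {a<..<b}"
  proof -
    have "{a..b} = insert a (insert b {a<..<b})" using assms by auto
    then have "(!) P ` {a..b} = insert (P!a) (insert (P!b) ((!) P ` {a<..<b}))" by auto
    moreover have "P!a \<notin> (!) P ` {a<..<b}" "P!b \<notin> (!) P ` {a<..<b}"
      using nth_in_img[OF d, of a "{a<..<b}"] nth_in_img[OF d, of b "{a<..<b}"] assms by auto
    ultimately show ?thesis unfolding seg_set by auto
  qed
  finally show ?thesis .
qed

lemma h1: "W \<inter> Z = {} \<Longrightarrow> Y \<subseteq> Z \<Longrightarrow> W \<inter> Y = {}" by blast
lemma h2: "W \<inter> Z = {} \<Longrightarrow> Y \<subseteq> Z \<Longrightarrow> Y \<inter> W = {}" by blast

lemma pairs4: "i<j \<Longrightarrow> j<(4::nat) \<Longrightarrow> (i=0\<and>j=1) \<or> (i=0\<and>j=2) \<or> (i=0\<and>j=3) \<or> (i=1\<and>j=2) \<or> (i=1\<and>j=3) \<or> (i=2\<and>j=3)"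
  by arith

lemma K4_intro:
  fixes b :: "nat \<Rightarrow> 'a" and Q :: "nat \<Rightarrow> nat \<Rightarrow> 'a list"
  assumes inj: "inj_on b {..<4}" and bV: "b ` {..<4} \<subseteq> V"
  and pq: "\<And>i j. i<j \<Longrightarrow> j<4 \<Longrightarrow> pth (Q i j) \<and> hd (Q i j) = b i \<and> last (Q i j) = b j"
  and ib: "\<And>i j. i<j \<Longrightarrow> j<4 \<Longrightarrow> set (inner (Q i j)) \<inter> b ` {..<4} = {}"
  and ii: "\<And>i j k l. i<j \<Longrightarrow> j<4 \<Longrightarrow> k<l \<Longrightarrow> l<4 \<Longrightarrow> (i,j) \<noteq> (k,l) \<Longrightarrow>
     set (inner (Q i j)) \<inter> set (inner (Q k l)) = {}"
  shows "has_K4_subdivision V E ends"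
  unfolding has_K4_subdivision_def
proof (rule exI[of _ b], rule exI[of _ Q], intro conjI)
  show "inj_on b {..<4}" "b ` {..<4} \<subseteq> V" using inj bV by auto
next
  show "\<forall>i j. i < j \<and> j < 4 \<longrightarrow> pth (Q i j) \<and> hd (Q i j) = b i \<and> last (Q i j) = b j \<and> set (inner (Q i j)) \<inter> b ` {..<4} = {}"
    using pq ib by auto
next
  show "\<forall>i j k l. i < j \<and> j < 4 \<and> k < l \<and> l < 4 \<and> (i, j) \<noteq> (k, l) \<longrightarrow> set (inner (Q i j)) \<inter> set (Q k l) = {}"
  proof (intro allI impI)
  fix i j k l :: nat assume h: "i < j \<and> j < 4 \<and> k < l \<and> l < 4 \<and> (i, j) \<noteq> (k, l)"
  have hk: "pth (Q k l)" "hd (Q k l) = b k" "last (Q k l) = b l" using pq h by auto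
  have "b k \<noteq> b l" using inj h by (auto simp: inj_on_def)
  then have "set (Q k l) = set (inner (Q k l)) \<union> {b k, b l}"
    using inner_set[of "Q k l"] hk pth_distinct pth_nonempty by (metis Un_insert_right
        insert_Diff insert_Diff_single sup_bot.right_neutral hd_in_set last_in_set insert_absorb2 Un_Diff_cancel2 Un_commute)
  then show "set (inner (Q i j)) \<inter> set (Q k l) = {}"
    using ii[of i j k l] ib[of i j] h by auto
  qed
qed

lemma canon:
  assumes P: "pth P" and ps: "p1 < p2" "p2 < p3" "p3 < p4" "p4 < length P"
  and A: "pth A" "hd A = P!p1" "last A = P!p3"
  and B: "pth B" "hd B = P!p2" "last B = P!p4"
  and C: "pth C" "hd C = P!p1" "last C = P!p4"
  and dA: "set (inner A) \<inter> (!) P ` {p1..p4} = {}"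
  and dB: "set (inner B) \<inter> (!) P ` {p1..p4} = {}"
  and dC: "set (inner C) \<inter> (!) P ` {p1..p4} = {}"
  and dAB: "set (inner A) \<inter> set (inner B) = {}"
  and dAC: "set (inner A) \<inter> set (inner C) = {}"
  and dBC: "set (inner B) \<inter> set (inner C) = {}"
  shows "has_K4_subdivision V E ends"
proof -
  define b where "b = (\<lambda>n::nat. if n = 0 then P!p1 else if n = 1 then P!p2 else if n = 2 then P!p3 else P!p4)"
  define Q where "Q = (\<lambda>(i::nat) (j::nat). if i = 0 \<and> j = 1 then seg P p1 p2 else if i = 1 \<and> j = 2 then seg P p2 p3
     else if i=2 \<and> j=3 then seg P p3 p4 else if i = 0 \<and> j = 2 then A else if i = 1 \<and> j = 3 then B else C)"
  have d: "distinct P" using P pth_distinct by auto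
  have lt: "\<forall>m\<in>{p1..p4}. m < length P" using ps by auto
  have bimg: "b ` {..<4} = (!) P ` {p1,p2,p3,p4}"
  proof -
    have "{..<4::nat} = {0,1,2,3}" by auto
    then show ?thesis by (auto simp: b_def)
  qed
  have binj: "inj_on b {..<4}"
  proof -
    have "\<And>x y. x \<in> {p1,p2,p3,p4} \<Longrightarrow> y \<in> {p1,p2,p3,p4} \<Longrightarrow> P!x = P!y \<Longrightarrow> x = y"
      using d ps by (auto simp: nth_eq_iff_index_eq)
    show ?thesis
    proof (rule inj_onI)
      fix x y assume xy: "x \<in> {..<4::nat}" "y \<in> {..<4::nat}" "b x = b y"
      have "x=0 \<or> x=1 \<or> x=2 \<or> x=3" "y=0 \<or> y=1 \<or> y=2 \<or> y=3" using xy by auto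
      then show "x = y" using xy(3) d ps by (auto simp: b_def nth_eq_iff_index_eq)
    qed
  qed
  have bV: "b ` {..<4} \<subseteq> V" unfolding bimg using P ps pth_setV[OF P] by auto
  have S1: "set (inner (seg P p1 p2)) = (!) P ` {p1<..<p2}" using inner_seg P ps by auto
  have S2: "set (inner (seg P p2 p3)) = (!) P ` {p2<..<p3}" using inner_seg P ps by auto
  have S3: "set (inner (seg P p3 p4)) = (!) P ` {p3<..<p4}" using inner_seg P ps by auto
  have sub1: "(!) P ` {p1<..<p2} \<subseteq> (!) P ` {p1..p4}" "(!) P ` {p2<..<p3} \<subseteq> (!) P ` {p1..p4}"
    "(!) P ` {p3<..<p4} \<subseteq> (!) P ` {p1..p4}" "(!) P ` {p1,p2,p3,p4} \<subseteq> (!) P ` {p1..p4}" using ps by auto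
  have e12: "(!) P ` {p1<..<p2} \<inter> (!) P ` {p2<..<p3} = {}" using img_Int[OF d] ps by (auto simp: nth_eq_iff_index_eq d)
  have e13: "(!) P ` {p1<..<p2} \<inter> (!) P ` {p3<..<p4} = {}" using ps by (auto simp: nth_eq_iff_index_eq d)
  have e23: "(!) P ` {p2<..<p3} \<inter> (!) P ` {p3<..<p4} = {}" using ps by (auto simp: nth_eq_iff_index_eq d)
  have eb: "(!) P ` {p1<..<p2} \<inter> (!) P ` {p1,p2,p3,p4} = {}" "(!) P ` {p2<..<p3} \<inter> (!) P ` {p1,p2,p3,p4} = {}"
     "(!) P ` {p3<..<p4} \<inter> (!) P ` {p1,p2,p3,p4} = {}"
    using ps by (auto simp: nth_eq_iff_index_eq d)
  have Q01: "Q 0 1 = seg P p1 p2" and Q12: "Q 1 2 = seg P p2 p3" and Q23: "Q 2 3 = seg P p3 p4"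
    and Q02: "Q 0 2 = A" and Q13: "Q 1 3 = B" and Q03: "Q 0 3 = C" by (simp_all add: Q_def)
  have ib6: "set (inner (Q 0 1)) \<inter> b ` {..<4} = {}" "set (inner (Q 1 2)) \<inter> b ` {..<4} = {}"
    "set (inner (Q 2 3)) \<inter> b ` {..<4} = {}" "set (inner (Q 0 2)) \<inter> b ` {..<4} = {}"
    "set (inner (Q 1 3)) \<inter> b ` {..<4} = {}" "set (inner (Q 0 3)) \<inter> b ` {..<4} = {}"
    unfolding bimg Q01 Q12 Q23 Q02 Q13 Q03 S1 S2 S3
    by (rule eb(1), rule eb(2), rule eb(3), rule h1[OF dA sub1(4)], rule h1[OF dB sub1(4)], rule h1[OF dC sub1(4)])
  have ii6: "set (inner (Q 0 1)) \<inter> set (inner (Q 1 2)) = {}"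
    "set (inner (Q 0 1)) \<inter> set (inner (Q 2 3)) = {}"
    "set (inner (Q 1 2)) \<inter> set (inner (Q 2 3)) = {}"
    "set (inner (Q 0 1)) \<inter> set (inner (Q 0 2)) = {}"
    "set (inner (Q 1 2)) \<inter> set (inner (Q 0 2)) = {}"
    "set (inner (Q 2 3)) \<inter> set (inner (Q 0 2)) = {}"
    "set (inner (Q 0 1)) \<inter> set (inner (Q 1 3)) = {}"
    "set (inner (Q 1 2)) \<inter> set (inner (Q 1 3)) = {}"
    "set (inner (Q 2 3)) \<inter> set (inner (Q 1 3)) = {}"
    "set (inner (Q 0 1)) \<inter> set (inner (Q 0 3)) = {}"
    "set (inner (Q 1 2)) \<inter> set (inner (Q 0 3)) = {}"
    "set (inner (Q 2 3)) \<inter> set (inner (Q 0 3)) = {}"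
    "set (inner (Q 0 2)) \<inter> set (inner (Q 1 3)) = {}"
    "set (inner (Q 0 2)) \<inter> set (inner (Q 0 3)) = {}"
    "set (inner (Q 1 3)) \<inter> set (inner (Q 0 3)) = {}"
    unfolding Q01 Q12 Q23 Q02 Q13 Q03 S1 S2 S3
    by (rule e12, rule e13, rule e23, rule h2[OF dA sub1(1)], rule h2[OF dA sub1(2)], rule h2[OF dA sub1(3)],
      rule h2[OF dB sub1(1)], rule h2[OF dB sub1(2)], rule h2[OF dB sub1(3)],
      rule h2[OF dC sub1(1)], rule h2[OF dC sub1(2)], rule h2[OF dC sub1(3)], rule dAB, rule dAC, rule dBC)
  show ?thesis
  proof (rule K4_intro[of b Q])
    show "inj_on b {..<4}" "b ` {..<4} \<subseteq> V" using binj bV by auto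
  next
    fix i j :: nat assume h: "i < j" "j < 4"
    then show "pth (Q i j) \<and> hd (Q i j) = b i \<and> last (Q i j) = b j"
      using pairs4[OF h] ps A B C P by (elim disjE) (auto simp: Q_def b_def pth_seg seg_hd seg_last)
  next
    fix i j :: nat assume h: "i < j" "j < 4"
    then show "set (inner (Q i j)) \<inter> b ` {..<4} = {}"
      using pairs4[OF h] ib6 by (elim disjE) auto
  next
    fix i j k l :: nat assume h: "i < j" "j < 4" "k < l" "l < 4" "(i, j) \<noteq> (k, l)"
    show "set (inner (Q i j)) \<inter> set (inner (Q k l)) = {}"
      using pairs4[OF h(1,2)] pairs4[OF h(3,4)] h(5)
      apply (elim disjE)
      using ii6 by (simp_all only: Int_commute prod.inject simp_thms) 
  qed
qed

definition good where "good Q \<longleftrightarrow> pth Q \<and> (\<forall>u. ad (last Q) u \<longrightarrow> u \<in> set Q)"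
definition NI where "NI Q = {n. n + 2 < length Q \<and> ad (last Q) (Q!n)}"
definition J where "J Q = Max (NI Q)"
definition mu where "mu Q = J Q * (card V + 1) + length Q"

lemma len_le: "pth Q \<Longrightarrow> length Q \<le> card V"
  by (metis distinct_card card_mono[OF finV] pth_setV pth_distinct)

lemma NI_fin: "finite (NI Q)"
  by (rule finite_subset[of _ "{..<length Q}"]) (auto simp: NI_def)

lemma NI_card: assumes "good Q" shows "2 \<le> card (NI Q)"
proof -
  let ?L = "length Q" and ?e = "last Q"
  have p: "pth Q" and g: "\<forall>u. ad ?e u \<longrightarrow> u \<in> set Q" using assms good_def by auto
  have ne: "Q \<noteq> []" using p pth_nonempty by auto
  have eV: "?e \<in> V" using p ne pth_setV last_in_set by blast
  define S' where "S' = {n. n < ?L \<and> ad ?e (Q!n)}"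
  have finS: "finite S'" by (rule finite_subset[of _ "{..<?L}"]) (auto simp: S'_def)
  have "{u\<in>V. ad ?e u} \<subseteq> (!) Q ` S'"
  proof
    fix u assume "u \<in> {u\<in>V. ad ?e u}"
    then have "ad ?e u" "u \<in> set Q" using g by auto
    then obtain n where "n < ?L" "Q!n = u" by (auto simp: in_set_conv_nth)
    then show "u \<in> (!) Q ` S'" using \<open>ad ?e u\<close> unfolding S'_def by auto
  qed
  then have "card {u\<in>V. ad ?e u} \<le> card ((!) Q ` S')" using finS by (intro card_mono) auto
  also have "\<dots> \<le> card S'" using finS by (rule card_image_le)
  also have "S' \<subseteq> insert (?L - 2) (NI Q)"
  proof
    fix n assume n: "n \<in> S'"
    have "n \<noteq> ?L - 1"
    proof
      assume "n = ?L - 1"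
      then have "Q!n = ?e" using ne by (simp add: last_conv_nth)
      then show False using n ad_neq unfolding S'_def by force
    qed
    then show "n \<in> insert (?L - 2) (NI Q)" using n unfolding S'_def NI_def by auto
  qed
  then have "card S' \<le> card (insert (?L - 2) (NI Q))" using NI_fin by (intro card_mono) auto
  also have "\<dots> \<le> Suc (card (NI Q))" by (rule card_insert_le_m1) auto
  finally show ?thesis using deg3[OF eV] by simp
qed

lemma J_in: "good Q \<Longrightarrow> J Q \<in> NI Q"
  unfolding J_def using NI_card[of Q] NI_fin[of Q] by (intro Max_in) auto

lemma J_ge: "n \<in> NI Q \<Longrightarrow> n \<le> J Q"
  unfolding J_def using NI_fin by auto

lemma J_below: assumes "good Q" shows "\<exists>i\<in>NI Q. i < J Q"
proof -
  have "card (NI Q - {J Q}) \<ge> 1" using NI_card[OF assms] NI_fin J_in[OF assms] by simp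
  then obtain i where "i \<in> NI Q" "i \<noteq> J Q" by (metis Diff_iff One_nat_def card.empty ex_in_conv insertI1 not_one_le_zero)
  then show ?thesis using J_ge[of i Q] by (intro bexI[of _ i]) auto
qed

lemma mu_bound: "good Q \<Longrightarrow> mu Q < (card V + 1) * (card V + 1)"
proof -
  assume g: "good Q"
  have l: "length Q \<le> card V" using g len_le good_def by auto
  have "J Q < length Q" using J_in[OF g] unfolding NI_def by auto
  then have "J Q + 1 \<le> card V" using l by auto
  then have A: "(J Q + 1) * (card V + 1) \<le> card V * (card V + 1)" by (rule mult_le_mono1)
  have B: "(J Q + 1) * (card V + 1) = J Q * (card V + 1) + card V + 1" by simp
  have C: "card V * (card V + 1) < (card V + 1) * (card V + 1)" by simp
  show ?thesis unfolding mu_def using A B C l by linarith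
qed

lemma good_exists: assumes "V \<noteq> {}" shows "\<exists>Q. good Q"
proof -
  obtain v where v: "v \<in> V" using assms by auto
  have "\<exists>Q. pth Q \<and> (\<forall>R. pth R \<longrightarrow> length R \<le> length Q)"
    by (rule ex_has_greatest_nat[of pth "[v]" length "card V + 1"]) (use v len_le in \<open>auto simp: less_Suc_eq_le\<close>)
  then obtain Q where Q: "pth Q" "\<And>R. pth R \<Longrightarrow> length R \<le> length Q" by auto
  have "good Q" unfolding good_def
  proof (intro conjI allI impI)
    show "pth Q" by fact
    fix u assume u: "ad (last Q) u"
    show "u \<in> set Q"
    proof (rule ccontr)
      assume "u \<notin> set Q"
      then have "pth (Q @ [u])" using pth_append[of Q "[u]"] Q(1) pth_nonempty ad_V[OF u] u by auto
      then show False using Q(2)[of "Q @ [u]"] by simp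
    qed
  qed
  then show ?thesis by blast
qed

lemma maxgood_exists: assumes "V \<noteq> {}" shows "\<exists>P. good P \<and> (\<forall>Q. good Q \<longrightarrow> mu Q \<le> mu P)"
  using good_exists[OF assms] ex_has_greatest_nat[of good _ mu "(card V + 1) * (card V + 1)"] mu_bound
  by blast

end


locale maxP = G3 +
  fixes P :: "'a list"
  assumes gP: "good P" and maxP: "\<And>Q. good Q \<Longrightarrow> mu Q \<le> mu P"
begin

definition k where "k = length P - 1"
definition j where "j = J P"
definition ear where "ear t s X \<longleftrightarrow> t < length P \<and> s < length P \<and> t \<noteq> s \<and> pth (P!t # X @ [P!s])
   \<and> set X \<inter> set P = {} \<and> (X \<noteq> [] \<or> (s \<noteq> Suc t \<and> t \<noteq> Suc s))"

lemma pP: "pth P" using gP good_def by auto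
lemma dP: "distinct P" using pP pth_distinct by auto
lemma neP: "P \<noteq> []" using pP pth_nonempty by auto
lemma lenP: "length P = Suc k" using neP unfolding k_def by (cases P) auto
lemma lastP: "last P = P!k" using neP unfolding k_def by (simp add: last_conv_nth)
lemma nbk: "ad (P!k) u \<Longrightarrow> u \<in> set P" using gP lastP good_def by auto
lemma PV: "n < length P \<Longrightarrow> P!n \<in> V" using pP pth_setV nth_mem by blast

lemma j_NI: "j + 2 < length P" "ad (P!k) (P!j)"
  using J_in[OF gP] unfolding j_def NI_def lastP by auto
lemma j_max: "n + 2 < length P \<Longrightarrow> ad (P!k) (P!n) \<Longrightarrow> n \<le> j"
  using J_ge[of n P] unfolding j_def NI_def lastP by auto
lemma i_ex: "\<exists>i<j. ad (P!k) (P!i)"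
  using J_below[OF gP] unfolding j_def NI_def lastP by auto

definition i where "i = (SOME i. i < j \<and> ad (P!k) (P!i))"
lemma i_props: "i < j" "ad (P!k) (P!i)"
  using someI_ex[OF i_ex] unfolding i_def by auto

lemma jk: "j + 1 < k" using j_NI lenP by simp

lemma mu_lt: assumes "good Q" "j < J Q" shows False
proof -
  have l: "length P \<le> card V" "length Q \<le> card V" using len_le pP assms(1) good_def by auto
  have "(j + 1) * (card V + 1) \<le> J Q * (card V + 1)" using assms(2) by (intro mult_le_mono1) simp
  then have "mu P < mu Q" unfolding mu_def j_def[symmetric] using l by simp
  then show False using maxP[OF assms(1)] by simp
qed

lemma mu_len: assumes "good Q" "j \<le> J Q" "length P < length Q" shows False
proof -
  have "j * (card V + 1) \<le> J Q * (card V + 1)" using assms(2) by (intro mult_le_mono1) simp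
  then have "mu P < mu Q" unfolding mu_def j_def[symmetric] using assms(3) by simp
  then show False using maxP[OF assms(1)] by simp
qed

lemma ear_sym: "ear t s X \<Longrightarrow> ear s t (rev X)"
  unfolding ear_def using pth_rev[of "P!t # X @ [P!s]"] by auto

lemma ear_parts: assumes "ear t s X"
  shows "pth (P!t # X)" "ad (last (P!t # X)) (P!s)" "P!t \<noteq> P!s"
proof -
  have p: "pth ((P!t # X) @ [P!s])" using assms unfolding ear_def by simp
  then show "pth (P!t # X)" "ad (last (P!t # X)) (P!s)" using pth_append[of "P!t # X" "[P!s]"] by auto
  show "P!t \<noteq> P!s" using assms dP unfolding ear_def by (simp add: nth_eq_iff_index_eq)
qed

lemma ear_parts2: assumes "ear t s X" "X \<noteq> []"
  shows "pth X" "ad (P!t) (hd X)" "ad (last X) (P!s)"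
proof -
  have p: "pth ([P!t] @ X)" using ear_parts(1)[OF assms(1)] by simp
  then show "pth X" "ad (P!t) (hd X)" using pth_append[of "[P!t]" X] assms(2) by auto
  show "ad (last X) (P!s)" using ear_parts(2)[OF assms(1)] assms(2) by simp
qed

lemma ear_not_k: assumes "j < t" "t < k" "ear t s X" shows "s < k"
proof (rule ccontr)
  assume "\<not> s < k"
  then have s: "s = k" using assms(3) lenP unfolding ear_def by auto
  show False
  proof (cases "X = []")
    case True
    then have "ad (P!t) (P!k)" using ear_parts(2)[OF assms(3)] s by simp
    moreover have "t + 2 < length P" using assms(3) s True lenP assms(2) unfolding ear_def by auto
    ultimately show False using j_max[of t] ad_sym assms(1) by fastforce
  next
    case False
    then have "ad (P!k) (last X)" using ear_parts2(3)[OF assms(3)] s ad_sym by auto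
    then have "last X \<in> set P" by (rule nbk)
    moreover have "last X \<in> set X" using False by simp
    ultimately show False using assms(3) unfolding ear_def by blast
  qed
qed

lemma third_nb: assumes "t < length P" shows "\<exists>q. ad (P!t) q \<and> q \<noteq> P!(t-1) \<and> q \<noteq> P!(Suc t)"
proof (rule ccontr)
  assume "\<not> ?thesis"
  then have "{u\<in>V. ad (P!t) u} \<subseteq> {P!(t-1), P!(Suc t)}" by auto
  then have "card {u\<in>V. ad (P!t) u} \<le> card {P!(t-1), P!(Suc t)}" by (intro card_mono) auto
  also have "\<dots> \<le> 2" by (cases "P!(t-1) = P!(Suc t)") auto
  finally show False using deg3[OF PV[OF assms]] by simp
qed

lemma ear_exists: assumes "j < t" "t < k" shows "\<exists>s X. ear t s X"
proof -
  have tl: "t < length P" "Suc t < length P" using assms lenP by auto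
  obtain q where q: "ad (P!t) q" "q \<noteq> P!(t-1)" "q \<noteq> P!(Suc t)" using third_nb[OF tl(1)] by blast
  have qV: "q \<in> V" "P!t \<in> V" using ad_V[OF q(1)] by auto
  show ?thesis
  proof (cases "q \<in> set P")
    case True
    then obtain s where s: "s < length P" "P!s = q" by (auto simp: in_set_conv_nth)
    have "s \<noteq> t" using q(1) s ad_neq by auto
    moreover have "s \<noteq> Suc t" using s q(3) by auto
    moreover have "t \<noteq> Suc s" using s q(2) by auto
    moreover have "pth [P!t, q]" using q(1) qV ad_neq[OF q(1)] by (simp add: pth_Cons2)
    ultimately have "ear t s []" unfolding ear_def using s tl by auto
    then show ?thesis by blast
  next
    case False
    define R where "R X \<longleftrightarrow> pth X \<and> hd X = q \<and> set X \<inter> set P = {}" for X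
    have R0: "R [q]" unfolding R_def using qV False by auto
    have "\<exists>X. R X \<and> (\<forall>Y. R Y \<longrightarrow> length Y \<le> length X)"
      by (rule ex_has_greatest_nat[of R "[q]" length "card V + 1"])
        (use R0 len_le in \<open>auto simp: R_def less_Suc_eq_le\<close>)
    then obtain X where X: "R X" and Xmax: "\<And>Y. R Y \<Longrightarrow> length Y \<le> length X" by auto
    have pX: "pth X" and hX: "hd X = q" and dX: "set X \<inter> set P = {}" using X R_def by auto
    have Xne: "X \<noteq> []" using pX pth_nonempty by auto
    show ?thesis
    proof (cases "\<exists>s<length P. s \<noteq> t \<and> ad (last X) (P!s)")
      case True
      then obtain s where s: "s < length P" "s \<noteq> t" "ad (last X) (P!s)" by auto
      have "pth (X @ [P!s])" using pth_append[of X "[P!s]"] pX Xne s dX PV[OF s(1)] by auto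
      moreover have "P!t \<notin> set (X @ [P!s])" using dX tl dP s by (auto simp: nth_eq_iff_index_eq)
      ultimately have "pth ([P!t] @ (X @ [P!s]))" using pth_append[of "[P!t]" "X @ [P!s]"] qV q(1) hX Xne
        by auto
      then have "ear t s X" unfolding ear_def using s tl dX Xne by auto
      then show ?thesis by blast
    next
      case noear: False
      define Q where "Q = seg P 0 t @ X"
      have ps: "pth (seg P 0 t)" using pth_seg[OF pP, of 0 t] tl by simp
      have "set (seg P 0 t) \<subseteq> set P" using tl by (auto simp: seg_set)
      then have "set (seg P 0 t) \<inter> set X = {}" using dX by blast
      then have pQ: "pth Q" unfolding Q_def using pth_append[of "seg P 0 t" X] ps pX Xne hX q(1)
        by (auto simp: seg_ne seg_last)
      have lastQ: "last Q = last X" unfolding Q_def using Xne by simp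
      have gQ: "good Q" unfolding good_def
      proof (intro conjI allI impI)
        show "pth Q" by fact
        fix u assume u: "ad (last Q) u"
        show "u \<in> set Q"
        proof (cases "u \<in> set P")
          case True
          then obtain s where s: "s < length P" "P!s = u" by (auto simp: in_set_conv_nth)
          then have "s = t" using noear u lastQ by auto
          then show ?thesis using s unfolding Q_def by (auto simp: seg_set)
        next
          case uP: False
          show ?thesis
          proof (rule ccontr)
            assume "u \<notin> set Q"
            then have "u \<notin> set X" unfolding Q_def by auto
            then have "pth (X @ [u])" using pth_append[of X "[u]"] pX Xne u lastQ ad_V[OF u] by auto
            then have "R (X @ [u])" unfolding R_def using hX Xne dX uP by auto
            then show False using Xmax[of "X @ [u]"] by simp
          qed
        qed
      qed
      have "t \<le> J Q"
      proof (rule ccontr)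
        assume nt: "\<not> t \<le> J Q"
        then have lt: "J Q < Suc t" by simp
        have "Q ! n = P ! n" if "n < Suc t" for n unfolding Q_def using that by (simp add: nth_append seg_nth)
        then have "Q ! J Q = P ! J Q" using lt by blast
        moreover have "ad (last Q) (Q ! J Q)" using J_in[OF gQ] unfolding NI_def by auto
        ultimately have "ad (last X) (P ! J Q)" using lastQ by simp
        moreover have "J Q < length P" "J Q \<noteq> t" using lt tl nt by auto
        ultimately show False using noear by blast
      qed
      then show ?thesis using mu_lt[OF gQ] assms by auto
    qed
  qed
qed

lemma reroute: assumes "ear a (Suc a) X" "j \<le> a" "Suc a \<le> k" shows False
proof -
  have Xne: "X \<noteq> []" using assms(1) unfolding ear_def by auto
  have pX: "pth X" "ad (P!a) (hd X)" "ad (last X) (P!Suc a)" using ear_parts2[OF assms(1) Xne] by auto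
  have dX: "set X \<inter> set P = {}" using assms(1) ear_def by auto
  have al: "Suc a < length P" "k < length P" using assms lenP by auto
  define S1 where "S1 = seg P 0 a"
  define S2 where "S2 = seg P (Suc a) k"
  have pS: "pth S1" "pth S2" unfolding S1_def S2_def using pth_seg[OF pP] al assms by auto
  have neS: "S1 \<noteq> []" "S2 \<noteq> []" unfolding S1_def S2_def using assms by (auto simp: seg_ne)
  have hS: "last S1 = P!a" "hd S2 = P!Suc a" "last S2 = P!k"
    unfolding S1_def S2_def using assms by (auto simp: seg_hd seg_last)
  have setS: "set S1 = (!) P ` {0..a}" "set S2 = (!) P ` {Suc a..k}" unfolding S1_def S2_def by (auto simp: seg_set)
  have subP: "set S1 \<subseteq> set P" "set S2 \<subseteq> set P" unfolding setS using al by auto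
  have d12: "set S1 \<inter> set S2 = {}" unfolding setS using dP al by (auto simp: nth_eq_iff_index_eq)
  have p2: "pth (X @ S2)" using pth_append[of X S2] pS pX Xne neS hS dX subP by auto
  have "set S1 \<inter> set (X @ S2) = {}" using d12 dX subP by auto
  then have pQ: "pth (S1 @ (X @ S2))" using pth_append[of S1 "X @ S2"] pS p2 pX Xne neS hS by auto
  define Q where "Q = S1 @ X @ S2"
  have lastQ: "last Q = P!k" unfolding Q_def using neS hS by simp
  have gQ: "good Q" unfolding good_def
  proof (intro conjI allI impI)
    show "pth Q" using pQ Q_def by simp
    fix u assume "ad (last Q) u"
    then have "u \<in> set P" using nbk lastQ by simp
    then obtain m where m: "m < length P" "P!m = u" by (auto simp: in_set_conv_nth)
    then have "m \<le> a \<or> (Suc a \<le> m \<and> m \<le> k)" using lenP by auto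
    then have "u \<in> set S1 \<union> set S2" unfolding setS using m by auto
    then show "u \<in> set Q" unfolding Q_def by auto
  qed
  have lQ: "length P < length Q" unfolding Q_def S1_def S2_def using Xne lenP assms by auto
  have Qj: "Q ! j = P ! j" unfolding Q_def S1_def using assms by (simp add: nth_append seg_nth)
  have "j \<in> NI Q" unfolding NI_def using lQ j_NI lastQ Qj by auto
  then have "j \<le> J Q" by (rule J_ge)
  then show False using mu_len[OF gQ _ lQ] by simp
qed

lemma merge: assumes e1: "ear x y X1" and e2: "ear w s X2" and wy: "w \<noteq> y" and int: "set X1 \<inter> set X2 \<noteq> {}"
  shows "\<exists>X3. ear w y X3"
proof -
  obtain A z B where X2: "X2 = A @ z # B" "z \<in> set X1" "\<forall>a\<in>set A. a \<notin> set X1"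
    using split_list_first_prop[of X2 "\<lambda>u. u \<in> set X1"] int by blast
  obtain C D where X1: "X1 = C @ z # D" using split_list[OF X2(2)] by blast
  have p1: "pth ((P!x # C @ [z]) @ (D @ [P!y]))" using e1 X1 ear_def by simp
  have p2: "pth ((P!w # A @ [z]) @ (B @ [P!s]))" using e2 X2 ear_def by simp
  have q1: "pth (D @ [P!y])" "ad z (hd (D @ [P!y]))" using pth_append[of "P!x # C @ [z]" "D @ [P!y]"] p1 by auto
  have q2: "pth (P!w # A @ [z])" using pth_append[of "P!w # A @ [z]" "B @ [P!s]"] p2 by auto
  have d1: "set X1 \<inter> set P = {}" "set X2 \<inter> set P = {}" using e1 e2 ear_def by auto
  have dist1: "distinct X1" using pth_distinct[OF p1] X1 by auto
  have wyP: "w < length P" "y < length P" using e1 e2 ear_def by auto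
  have "P!w \<noteq> P!y" using wyP wy dP by (simp add: nth_eq_iff_index_eq)
  moreover have "P!w \<notin> set D" "P!y \<notin> set D" "P!y \<notin> set A" "P!y \<noteq> z"
    using d1 X1 X2 wyP by auto
  moreover have "set A \<inter> set D = {}" using X2(3) X1 by auto
  moreover have "z \<notin> set D" using dist1 X1 by auto
  ultimately have "set (P!w # A @ [z]) \<inter> set (D @ [P!y]) = {}" by auto
  then have "pth ((P!w # A @ [z]) @ (D @ [P!y]))" using pth_append[of "P!w # A @ [z]" "D @ [P!y]"] q1 q2 by auto
  then have "pth (P!w # (A @ z # D) @ [P!y])" by simp
  moreover have "set (A @ z # D) \<inter> set P = {}" using d1 X1 X2 by auto
  ultimately have "ear w y (A @ z # D)" unfolding ear_def using wyP wy by auto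
  then show ?thesis by blast
qed

lemma nthP_eq: "m < length P \<Longrightarrow> n < length P \<Longrightarrow> (P!m = P!n) = (m = n)"
  using dP by (simp add: nth_eq_iff_index_eq)

lemma inner_pth: "pth L \<Longrightarrow> hd L \<noteq> last L \<Longrightarrow> set (inner L) = set L - {hd L, last L}"
  using inner_set pth_distinct pth_nonempty by blast

lemma XP: "set X \<inter> set P = {} \<Longrightarrow> x \<in> set X \<Longrightarrow> m < length P \<Longrightarrow> x \<noteq> P!m"
  by auto

lemma edge_pth: "ad u v \<Longrightarrow> pth [u, v]"
  using ad_V[of u v] ad_neq[of u v] by (simp add: pth_Cons2)

lemma img_drop_top: assumes "x \<in> f ` {a..(b::nat)}" "x \<noteq> f b" shows "x \<in> f ` {a..<b}"
proof -
  obtain m where m: "m \<in> {a..b}" "x = f m" using assms(1) by auto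
  then have "m \<noteq> b" using assms(2) by auto
  then have "m \<in> {a..<b}" using m by auto
  then show ?thesis using m(2) by blast
qed

lemma inner2[simp]: "inner [a, b] = []" by (simp add: inner_def)

lemma good_ear_K4: assumes "j < t" "t < k" "s < j" "ear t s X"
  shows "has_K4_subdivision V E ends"
proof -
  have kl: "k < length P" using lenP by simp
  have adj: "ad (P!j) (P!k)" "ad (P!i) (P!k)" using j_NI(2) i_props(2) ad_sym by auto
  have dX: "set X \<inter> set P = {}" using assms(4) ear_def by auto
  have ep: "pth (P!t # X)" "ad (last (P!t # X)) (P!s)" using ear_parts[OF assms(4)] by auto
  have iv: "i < j" using i_props by simp
  have pB: "pth [P!j, P!k]" "pth [P!i, P!k]" using edge_pth adj by auto
  have e0: "set (inner [P!j, P!k]) = {}" "set (inner [P!i, P!k]) = {}" by simp_all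
  show ?thesis
  proof (cases "s \<le> i")
    case True
    define L0 where "L0 = (P!t # X) @ seg P s i"
    have ps: "pth (seg P s i)" using pth_seg[OF pP True] iv assms kl by simp
    have "P!t \<notin> set (seg P s i)" using assms iv True kl by (auto simp: seg_set nthP_eq)
    moreover have "set X \<inter> set (seg P s i) = {}" using dX iv assms kl by (auto simp: seg_set)
    ultimately have "set (P!t # X) \<inter> set (seg P s i) = {}" by auto
    then have pL0: "pth L0" unfolding L0_def using pth_append[of "P!t # X" "seg P s i"] ep ps True
      by (simp add: seg_ne seg_hd)
    then have pA: "pth (rev L0)" by (simp only: pth_rev)
    have hl: "hd (rev L0) = P!i" "last (rev L0) = P!t" unfolding L0_def using True
      by (simp_all add: seg_ne seg_last hd_rev last_rev)
    have ne: "P!i \<noteq> P!t" using assms iv kl by (simp add: nthP_eq)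
    have sA: "set (inner (rev L0)) = set L0 - {P!i, P!t}" using inner_pth[OF pA] hl ne by simp
    have sL0: "set L0 = insert (P!t) (set X \<union> (!) P ` {s..i})" unfolding L0_def by (simp add: seg_set)
    have dA: "set (inner (rev L0)) \<inter> (!) P ` {i..k} = {}"
    proof -
      have "x \<notin> (!) P ` {i..k}" if x: "x \<in> set L0 - {P!i, P!t}" for x
      proof -
        have "x \<in> set X \<or> x \<in> (!) P ` {s..i}" "x \<noteq> P!i" using x unfolding sL0 by auto
        then have "x \<in> set X \<or> x \<in> (!) P ` {s..<i}" using img_drop_top[of x "(!) P" s i] by metis
        then show ?thesis
        proof
          assume "x \<in> set X" then show ?thesis using dX kl by (auto simp: image_iff)
        next
          assume "x \<in> (!) P ` {s..<i}"
          then obtain m where "m < i" "x = P!m" by auto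
          then show ?thesis using kl iv assms by (auto simp: nthP_eq)
        qed
      qed
      then show ?thesis unfolding sA by blast
    qed
    show ?thesis
      by (rule canon[OF pP iv assms(1) assms(2) kl pA hl pB(1) _ _ pB(2) _ _ dA _ _ _ _ _])
        (simp_all add: e0)
  next
    case False
    define A where "A = rev (P!t # X @ [P!s])"
    define C where "C = rev (seg P i s) @ [P!k]"
    have "pth (P!t # X @ [P!s])" using assms(4) ear_def by simp
    then have pA: "pth A" unfolding A_def by (simp only: pth_rev)
    have hA: "hd A = P!s" "last A = P!t" unfolding A_def by (simp_all add: hd_rev last_rev)
    have ne: "P!s \<noteq> P!t" using assms kl by (simp add: nthP_eq)
    have "set (inner A) = set A - {P!s, P!t}" using inner_pth[OF pA] hA ne by simp
    also have "set A = insert (P!t) (insert (P!s) (set X))" unfolding A_def by auto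
    finally have sA: "set (inner A) = set X - {P!s, P!t}" by auto
    have ps: "pth (rev (seg P i s))" using pth_seg[OF pP, of i s] False kl assms by (simp add: pth_rev)
    have "P!k \<notin> set (rev (seg P i s))" using assms kl by (auto simp: seg_set nthP_eq)
    then have "set (rev (seg P i s)) \<inter> set [P!k] = {}" by simp
    then have pC: "pth C" unfolding C_def using pth_append[of "rev (seg P i s)" "[P!k]"] ps adj False
      PV[OF kl] by (simp add: seg_ne last_rev seg_hd)
    have hC: "hd C = P!s" "last C = P!k" unfolding C_def using False by (simp_all add: hd_rev seg_last seg_ne)
    have ne2: "P!s \<noteq> P!k" using assms kl by (simp add: nthP_eq)
    have "set (inner C) = set C - {P!s, P!k}" using inner_pth[OF pC] hC ne2 by simp
    also have "set C = insert (P!k) ((!) P ` {i..s})" unfolding C_def by (simp add: seg_set)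
    finally have eqC: "set (inner C) = insert (P!k) ((!) P ` {i..s}) - {P!s, P!k}" .
    have sC: "set (inner C) \<subseteq> (!) P ` {i..<s}"
    proof
      fix x assume "x \<in> set (inner C)"
      then have "x \<in> (!) P ` {i..s}" "x \<noteq> P!s" unfolding eqC by auto
      then show "x \<in> (!) P ` {i..<s}" by (rule img_drop_top)
    qed
    have dA: "set (inner A) \<inter> (!) P ` {s..k} = {}" unfolding sA using dX kl by (auto simp: image_iff)
    have dC: "set (inner C) \<inter> (!) P ` {s..k} = {}"
    proof -
      have "x \<notin> (!) P ` {s..k}" if "x \<in> (!) P ` {i..<s}" for x
        using that kl assms by (auto simp: nthP_eq)
      then show ?thesis using sC by blast
    qed
    have dAC: "set (inner A) \<inter> set (inner C) = {}"
    proof -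
      have "(!) P ` {i..<s} \<subseteq> set P" using assms kl by auto
      then show ?thesis using sA sC dX by blast
    qed
    have sv: "s < j" by fact
    show ?thesis
      by (rule canon[OF pP sv assms(1) assms(2) kl pA hA pB(1) _ _ pC hC dA _ dC _ dAC _])
        (simp_all add: e0)
  qed
qed

lemma cross_K4: assumes "j \<le> a1" "a1 < a2" "a2 < a3" "a3 < a4" "a4 < k" "ear a1 a3 XA" "ear a2 a4 XB"
  "set XA \<inter> set XB = {}"
  shows "has_K4_subdivision V E ends"
proof -
  have kl: "k < length P" using lenP by simp
  have adj: "ad (P!j) (P!k)" using j_NI(2) ad_sym by auto
  have dX: "set XA \<inter> set P = {}" "set XB \<inter> set P = {}" using assms ear_def by auto
  have pA: "pth (P!a1 # XA @ [P!a3])" "pth (P!a2 # XB @ [P!a4])" using assms(6,7) ear_def by auto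
  have iA: "set (inner (P!a1 # XA @ [P!a3])) = set XA" "set (inner (P!a2 # XB @ [P!a4])) = set XB"
    by (simp_all add: inner_def)
  define C where "C = rev (seg P j a1) @ rev (seg P a4 k)"
  have ps: "pth (rev (seg P j a1))" "pth (rev (seg P a4 k))"
    using pth_seg[OF pP, of j a1] pth_seg[OF pP, of a4 k] assms kl by (simp_all add: pth_rev)
  have "set (seg P j a1) \<inter> set (seg P a4 k) = {}"
  proof -
    have "(!) P ` {j..a1} \<inter> (!) P ` {a4..k} = (!) P ` ({j..a1} \<inter> {a4..k})"
    proof -
      have "\<forall>m\<in>{j..a1} \<union> {a4..k}. m < length P" using assms kl by auto
      then show ?thesis using img_Int[OF dP, of "{j..a1}" "{a4..k}"] by blast
    qed
    also have "{j..a1} \<inter> {a4..k} = {}" using assms by auto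
    finally show ?thesis by (simp add: seg_set)
  qed
  then have "set (rev (seg P j a1)) \<inter> set (rev (seg P a4 k)) = {}" by simp
  then have pC: "pth C" unfolding C_def using pth_append[of "rev (seg P j a1)" "rev (seg P a4 k)"] ps adj assms
    by (simp add: seg_ne last_rev seg_hd hd_rev seg_last)
  have hC: "hd C = P!a1" "last C = P!a4" unfolding C_def using assms by (simp_all add: hd_rev seg_last seg_ne last_rev seg_hd)
  have ne2: "P!a1 \<noteq> P!a4" using assms kl by (simp add: nthP_eq)
  have "set (inner C) = set C - {P!a1, P!a4}" using inner_pth[OF pC] hC ne2 by simp
  also have "set C = (!) P ` {j..a1} \<union> (!) P ` {a4..k}" unfolding C_def by (simp add: seg_set)
  finally have sC: "set (inner C) = ((!) P ` {j..a1} \<union> (!) P ` {a4..k}) - {P!a1, P!a4}" .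
  have dC: "set (inner C) \<inter> (!) P ` {a1..a4} = {}"
  proof -
    have "x \<notin> (!) P ` {a1..a4}" if "x \<in> set (inner C)" for x
    proof -
      have x: "x \<in> (!) P ` {j..a1} \<union> (!) P ` {a4..k}" "x \<noteq> P!a1" "x \<noteq> P!a4"
        using that unfolding sC by auto
      then obtain m where m: "x = P!m" "m \<in> {j..a1} \<union> {a4..k}" by blast
      then have "m \<noteq> a1" "m \<noteq> a4" using x by auto
      then show ?thesis using m kl assms by (auto simp: nthP_eq)
    qed
    then show ?thesis by blast
  qed
  have CP: "set (inner C) \<subseteq> set P" unfolding sC using assms kl by auto
  have dA: "set (inner (P!a1 # XA @ [P!a3])) \<inter> (!) P ` {a1..a4} = {}"
    "set (inner (P!a2 # XB @ [P!a4])) \<inter> (!) P ` {a1..a4} = {}"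
    unfolding iA using dX assms kl by (auto simp: image_iff)
  have dAB: "set (inner (P!a1 # XA @ [P!a3])) \<inter> set (inner (P!a2 # XB @ [P!a4])) = {}"
    unfolding iA by fact
  have dAC: "set (inner (P!a1 # XA @ [P!a3])) \<inter> set (inner C) = {}"
    "set (inner (P!a2 # XB @ [P!a4])) \<inter> set (inner C) = {}"
    unfolding iA using CP dX by blast+
  show ?thesis
    by (rule canon[OF pP assms(2,3,4) _ pA(1) _ _ pA(2) _ _ pC hC dA dC dAB dAC])
      (use assms kl in simp_all)
qed

theorem K4: "has_K4_subdivision V E ends"
proof (rule ccontr)
  assume noK: "\<not> has_K4_subdivision V E ends"
  have ear_in: "j \<le> s \<and> s < k" if "j < t" "t < k" "ear t s X" for t s X
  proof -
    have "\<not> s < j" using good_ear_K4[OF that(1,2) _ that(3)] noK by blast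
    then show ?thesis using ear_not_k[OF that] by simp
  qed
  define IE where "IE x y \<longleftrightarrow> x < y \<and> j \<le> x \<and> y < k \<and> (\<exists>X. ear x y X)" for x y
  have IE_ear: "IE x y" if "ear t s X" "j \<le> t" "t < k" "j \<le> s" "s < k" "x = min t s" "y = max t s" for t s X x y
  proof (cases "t < s")
    case True then show ?thesis unfolding IE_def using that by auto
  next
    case False
    then have "s < t" using that(1) ear_def by auto
    then show ?thesis unfolding IE_def using that ear_sym[OF that(1)] by auto
  qed
  define D where "D d \<longleftrightarrow> (\<exists>x y. IE x y \<and> y - x = d)" for d
  have "\<exists>d. D d"
  proof -
    have k1: "j < k - 1" "k - 1 < k" using jk by auto
    obtain s X where e0: "ear (k-1) s X" using ear_exists[OF k1] by blast
    have "j \<le> s \<and> s < k" using ear_in[OF k1 e0] .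
    then have "IE (min (k-1) s) (max (k-1) s)" using IE_ear[OF e0] k1 by auto
    then show ?thesis unfolding D_def by blast
  qed
  then have "D (LEAST d. D d)" by (rule LeastI_ex)
  then obtain x y where xy: "IE x y" and gap: "y - x = (LEAST d. D d)" unfolding D_def by blast
  have minimal: "y - x \<le> y' - x'" if "IE x' y'" for x' y'
    unfolding gap using that by (intro Least_le) (auto simp: D_def)
  obtain X1 where X1: "ear x y X1" and xy2: "x < y" "j \<le> x" "y < k" using xy IE_def by auto
  have "y \<noteq> Suc x" using reroute[of x X1] X1 xy2 by auto
  then have g2: "Suc x < y" using xy2 by simp
  define w where "w = Suc x"
  have w: "j < w" "w < k" using xy2 g2 w_def by auto
  obtain s X2 where X2: "ear w s X2" using ear_exists[OF w] by blast
  have s: "j \<le> s" "s < k" "s \<noteq> w" using ear_in[OF w X2] X2 ear_def by auto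
  show False
  proof (cases "set X1 \<inter> set X2 = {}")
    case False
    have "w \<noteq> y" using g2 w_def by simp
    then obtain X3 where "ear w y X3" using merge[OF X1 X2] False by blast
    then have "IE w y" unfolding IE_def using w g2 xy2 w_def by auto
    then show False using minimal[of w y] w_def g2 by auto
  next
    case True
    consider "s < x" | "s = x" | "w < s \<and> s \<le> y" | "y < s" using s w_def by linarith
    then show False
    proof cases
      case 1
      have "ear s w (rev X2)" using ear_sym[OF X2] .
      moreover have "set (rev X2) \<inter> set X1 = {}" using True by auto
      ultimately have "has_K4_subdivision V E ends"
        using cross_K4[of s x w y "rev X2" X1] 1 s xy2 w_def g2 X1 by auto
      then show False using noK by simp
    next
      case 2
      have "IE x w" using IE_ear[OF X2] s 2 w xy2 w_def by auto
      then show False using minimal[of x w] w_def g2 by auto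
    next
      case 3
      have "IE w s" using IE_ear[OF X2] s 3 w by auto
      then show False using minimal[of w s] w_def g2 3 by auto
    next
      case 4
      have "has_K4_subdivision V E ends"
        using cross_K4[of x w y s X1 X2] 4 s xy2 w_def g2 X1 X2 True by auto
      then show False using noK by simp
    qed
  qed
qed

end

lemma final:
  fixes V :: "'a set" and E :: "'e set" and ends :: "'e \<Rightarrow> 'a set" and C :: "'a \<Rightarrow> nat"
  assumes "series_parallel V E ends"
    and "V \<noteq> {}"
    and "is_counter V E ends C"
  shows "\<exists>v\<in>V. active E ends C v"
proof (rule ccontr)
  assume na: "\<not> (\<exists>v\<in>V. active E ends C v)"
  have mg: "multigraph V E ends" and noK: "\<not> has_K4_subdivision V E ends"
    using assms(1) series_parallel_def by auto
  have d3: "3 \<le> card {u\<in>V. adj E ends v u}" if v: "v \<in> V" for v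
  proof -
    have "\<not> active E ends C v" using na v by blast
    then have a: "deg E ends v > 2" "deg E ends v > 3 * C v" unfolding active_def by auto
    have b: "deg E ends v - val V E ends v \<le> C v" using assms(3) v unfolding is_counter_def by blast
    have "3 \<le> val V E ends v" using a b by linarith
    then show ?thesis unfolding val_def .
  qed
  interpret G3 V E ends using mg d3 by unfold_locales auto
  obtain P where "good P" "\<forall>Q. good Q \<longrightarrow> mu Q \<le> mu P" using maxgood_exists[OF assms(2)] by blast
  then interpret maxP V E ends P by unfold_locales auto
  show False using K4 noK by simp
qed


theorem lemma7:
  fixes V :: "'a set" and E :: "'e set" and ends :: "'e \<Rightarrow> 'a set" and C :: "'a \<Rightarrow> nat"
  assumes "series_parallel V E ends"
    and "V \<noteq> {}"
    and "is_counter V E ends C"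
  shows "\<exists>v\<in>V. active E ends C v"
  using final[OF assms] .

end
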